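(* For every $a\leq 0$ there exists a divergent series of positive real terms $\sum_{n=1}^{\infty}x_n$ such that $\{\sum_{n=1}^{\infty}(x_n-x_{\sigma(n)}) : \sigma\in S_\infty,\ \sum_{n=1}^{\infty}(x_n-x_{\sigma(n)})\text{ converges}\}=[a,\infty)$.
   Context: $S_\infty$ denotes the set of all permutations of $\mathbb{N}$. *)

theory Defs
  imports "HOL-Analysis.Analysis"
begin

end

theory Submission
  imports Defs
begin


fun P :: "nat \<Rightarrow> nat" where
  "P 0 = 0" | "P (Suc k) = P k + 2 * (Suc k)^2"

lemma P_even: "even (P k)"
  by (induction k) auto

lemma P_mono: "k \<le> j \<Longrightarrow> P k \<le> P j"
  by (induction j) (auto simp: le_Suc_eq)

lemma P_ge: "2 * k \<le> P k"
proof (induction k)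
  case (Suc k)
  have h: "(1::nat) \<le> (Suc k)^2" by simp
  have "2 * k + 2 \<le> P k + 2 * (Suc k)^2" using Suc h by linarith
  then show ?case by simp
qed simp

lemma P_less: "k < j \<Longrightarrow> P (Suc k) \<le> P j"
  using P_mono[of "Suc k" j] by simp

definition stg :: "nat \<Rightarrow> nat" where "stg p = (LEAST k. p < P (Suc k))"

lemma stg_bounds: "P (stg p) \<le> p \<and> p < P (Suc (stg p))"
proof -
  have ex: "p < P (Suc p)" using P_ge[of "Suc p"] by simp
  have 1: "p < P (Suc (stg p))" unfolding stg_def by (rule LeastI[of _ p]) (rule ex)
  have 2: "P (stg p) \<le> p"
  proof (cases "stg p")
    case 0 then show ?thesis by simp
  next
    case (Suc j)
    then have "j < stg p" by simp
    then have "\<not> p < P (Suc j)" unfolding stg_def by (rule not_less_Least)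
    then show ?thesis using Suc by simp
  qed
  show ?thesis using 1 2 by simp
qed

lemma stg_eq: "P k \<le> p \<Longrightarrow> p < P (Suc k) \<Longrightarrow> stg p = k"
proof -
  assume a: "P k \<le> p" "p < P (Suc k)"
  have b: "P (stg p) \<le> p" "p < P (Suc (stg p))" using stg_bounds by auto
  show "stg p = k"
  proof (rule ccontr)
    assume "stg p \<noteq> k"
    then consider "stg p < k" | "k < stg p" by linarith
    then show False
    proof cases
      case 1 then have "P (Suc (stg p)) \<le> P k" by (rule P_less)
      then show False using a b by linarith
    next
      case 2 then have "P (Suc k) \<le> P (stg p)" by (rule P_less)
      then show False using a b by linarith
    qed
  qed
qed

definition tprt :: "nat \<Rightarrow> nat" where
 "tprt p = (let k = stg p; r = p - P k in
    if even p then P (Suc k) + r + 1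
    else if 0 < k \<and> r div 2 < k^2 then P (k - 1) + r - 1 else p)"

lemma stg_st: "l < (Suc k)^2 \<Longrightarrow> stg (P k + 2*l) = k"
  by (rule stg_eq) auto

lemma stg_en: assumes "l < (Suc k)^2" shows "stg (P (Suc k) + 2*l + 1) = Suc k"
proof (rule stg_eq)
  have "(Suc k)^2 \<le> (Suc (Suc k))^2" by (simp add: power_mono)
  then have "2*l+1 < 2 * (Suc (Suc k))^2" using assms by linarith
  then show "P (Suc k) + 2 * l + 1 < P (Suc (Suc k))" by simp
qed simp

lemma tprt_st: "l < (Suc k)^2 \<Longrightarrow> tprt (P k + 2*l) = P (Suc k) + 2*l + 1"
  unfolding tprt_def Let_def using stg_st[of l k] P_even[of k] by auto

lemma tprt_en: "l < (Suc k)^2 \<Longrightarrow> tprt (P (Suc k) + 2*l + 1) = P k + 2*l"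
  unfolding tprt_def Let_def using stg_en[of l k] P_even[of "Suc k"] by auto

lemma decomp: obtains r where "p = P (stg p) + r" "r < 2 * (Suc (stg p))^2"
  using stg_bounds[of p] by (metis P.simps(2) add_less_cancel_left le_Suc_ex)

lemma even_decomp: assumes "even p"
  obtains l where "p = P (stg p) + 2*l" "l < (Suc (stg p))^2"
proof -
  obtain r where o: "p = P (stg p) + r" "r < 2 * (Suc (stg p))^2" by (rule decomp)
  have "even r" using assms o(1) P_even[of "stg p"] by (metis even_add)
  then obtain l where "r = 2*l" by blast
  then show ?thesis using that o by auto
qed

lemma tprt_odd_cases: assumes "odd p"
  shows "tprt p = p \<or> (\<exists>k l. l < (Suc k)^2 \<and> p = P (Suc k) + 2*l + 1)"
proof -
  obtain r where o: "p = P (stg p) + r" "r < 2 * (Suc (stg p))^2" by (rule decomp)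
  have "odd r" using assms o(1) P_even[of "stg p"] by (metis even_add)
  then obtain l where l: "r = 2*l+1" by (metis oddE)
  show ?thesis
  proof (cases "0 < stg p \<and> l < (stg p)^2")
    case True
    then obtain k where k: "stg p = Suc k" by (metis gr0_implies_Suc)
    then show ?thesis using True o l by auto
  next
    case False
    then have "tprt p = p" using assms o l unfolding tprt_def Let_def by auto
    then show ?thesis by simp
  qed
qed

lemma tprt_tprt: "tprt (tprt p) = p"
proof (cases "even p")
  case True
  then obtain l where l: "p = P (stg p) + 2*l" "l < (Suc (stg p))^2" by (rule even_decomp)
  then show ?thesis using tprt_st tprt_en by metis
next
  case False
  then consider "tprt p = p" | k l where "l < (Suc k)^2" "p = P (Suc k) + 2*l + 1"
    using tprt_odd_cases by blast
  then show ?thesis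
  proof cases
    case 1 then show ?thesis by simp
  next
    case 2 then show ?thesis using tprt_st tprt_en by metis
  qed
qed

lemma tprt_even: assumes "even p"
  shows "p < tprt p" "odd (tprt p)" "stg (tprt p) = Suc (stg p)"
proof -
  obtain l where l: "p = P (stg p) + 2*l" "l < (Suc (stg p))^2" using assms by (rule even_decomp)
  have t: "tprt p = P (Suc (stg p)) + 2*l + 1" using tprt_st l by metis
  show "p < tprt p" using t l by simp
  show "odd (tprt p)" using t P_even by simp
  show "stg (tprt p) = Suc (stg p)" using t stg_en l by metis
qed

lemma tprt_odd_le: assumes "odd p" shows "tprt p \<le> p"
  using tprt_odd_cases[OF assms] tprt_en by (metis le_add1 add_le_mono P_mono le_SucI order_refl le_add_same_cancel1 trans_le_add1)



definition lpos :: "nat \<Rightarrow> nat" where "lpos p = (p - P (stg p)) div 2"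

definition Cov :: "(nat \<Rightarrow> real) \<Rightarrow> (nat \<Rightarrow> bool) \<Rightarrow> nat \<Rightarrow> real" where
  "Cov c sel T = sum (\<lambda>p. c (stg p)) {p. p < T \<and> even p \<and> sel p \<and> T \<le> tprt p}"

definition Dc :: "(nat \<Rightarrow> nat) \<Rightarrow> nat \<Rightarrow> nat" where "Dc Ds j = min (Ds j) ((Suc j)^2)"

lemma lpos_st: "l < (Suc k)^2 \<Longrightarrow> lpos (P k + 2*l) = l"
  unfolding lpos_def using stg_st by simp

lemma tprt_lt_next: "l < (Suc j)^2 \<Longrightarrow> P (Suc j) + 2*l + 1 < P (Suc (Suc j))"
proof -
  assume a: "l < (Suc j)^2"
  have "(Suc j)^2 \<le> (Suc (Suc j))^2" by (simp add: power_mono)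
  then have "2*l+1 < 2 * (Suc (Suc j))^2" using a by linarith
  then show ?thesis by simp
qed

lemma cov_set:
  assumes selD: "\<And>p. even p \<Longrightarrow> sel p \<longleftrightarrow> lpos p < Ds (stg p)"
    and r: "r < 2*(Suc (Suc k))^2" and T: "T = P (Suc k) + r"
  shows "{p. p < T \<and> even p \<and> sel p \<and> T \<le> tprt p} =
     (\<lambda>l. P k + 2*l) ` {r div 2 ..< Dc Ds k} \<union> (\<lambda>l. P (Suc k) + 2*l) ` {..< min (Dc Ds (Suc k)) ((r+1) div 2)}"
    (is "?A = ?B")
proof
  show "?A \<subseteq> ?B"
  proof
    fix p assume "p \<in> ?A"
    then have p: "p < T" "even p" "sel p" "T \<le> tprt p" by auto
    define j where "j = stg p"
    obtain l where l: "p = P j + 2*l" "l < (Suc j)^2" using even_decomp[OF p(2)] j_def by metis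
    have lp: "lpos p = l" using lpos_st l by simp
    have tp: "tprt p = P (Suc j) + 2*l + 1" using tprt_st l by simp
    have sl: "l < Ds j" using selD[OF p(2)] p(3) lp j_def by simp
    consider "j < k" | "j = k" | "j = Suc k" | "Suc k < j" by linarith
    then show "p \<in> ?B"
    proof cases
      case 1
      then have "P (Suc (Suc j)) \<le> P (Suc k)" using P_less[of "Suc j" "Suc k"] by simp
      then show ?thesis using tprt_lt_next[OF l(2)] tp p(4) T by linarith
    next
      case 2
      have "r \<le> 2*l+1" using p(4) tp T 2 by simp
      then have "r div 2 \<le> l" by linarith
      moreover have "l < Dc Ds k" using sl l(2) 2 unfolding Dc_def by simp
      ultimately show ?thesis using l(1) 2 by auto
    next
      case 3
      have "2*l < r" using p(1) l(1) T 3 by simp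
      then have "l < (r+1) div 2" by linarith
      moreover have "l < Dc Ds (Suc k)" using sl l(2) 3 unfolding Dc_def by simp
      ultimately show ?thesis using l(1) 3 by auto
    next
      case 4
      then have "P (Suc (Suc k)) \<le> P j" using P_less[of "Suc k" j] by blast
      then show ?thesis using p(1) l(1) T r by simp
    qed
  qed
next
  show "?B \<subseteq> ?A"
  proof
    fix p assume "p \<in> ?B"
    then consider l where "p = P k + 2*l" "r div 2 \<le> l" "l < Dc Ds k"
      | l where "p = P (Suc k) + 2*l" "l < Dc Ds (Suc k)" "l < (r+1) div 2" by auto
    then show "p \<in> ?A"
    proof cases
      case 1
      have l2: "l < (Suc k)^2" "l < Ds k" using 1(3) unfolding Dc_def by auto
      have ev: "even p" using 1(1) P_even by simp
      have "sel p" using selD[OF ev] 1(1) lpos_st[OF l2(1)] stg_st[OF l2(1)] l2(2) by simp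
      moreover have "p < T" using 1(1) l2(1) T by simp
      moreover have "T \<le> tprt p" using tprt_st[OF l2(1)] 1 T by simp
      ultimately show ?thesis using ev by simp
    next
      case 2
      have l2: "l < (Suc (Suc k))^2" "l < Ds (Suc k)" using 2(2) unfolding Dc_def by auto
      have ev: "even p" using 2(1) P_even by simp
      have "sel p" using selD[OF ev] 2(1) lpos_st[OF l2(1)] stg_st[OF l2(1)] l2(2) by simp
      moreover have "p < T" using 2(1) 2(3) T by simp
      moreover have "T \<le> tprt p"
        using tprt_st[OF l2(1)] 2(1) T r by simp
      ultimately show ?thesis using ev by simp
    qed
  qed
qed

lemma cov_formula:
  assumes selD: "\<And>p. even p \<Longrightarrow> sel p \<longleftrightarrow> lpos p < Ds (stg p)"
    and r: "r < 2*(Suc (Suc k))^2"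
  shows "Cov c sel (P (Suc k) + r) = c k * real (Dc Ds k - r div 2)
          + c (Suc k) * real (min (Dc Ds (Suc k)) ((r+1) div 2))"
proof -
  let ?f = "\<lambda>l. P k + 2*l" and ?g = "\<lambda>l. P (Suc k) + 2*l"
  let ?I = "{r div 2 ..< Dc Ds k}" and ?J = "{..< min (Dc Ds (Suc k)) ((r+1) div 2)}"
  have I: "\<And>l. l \<in> ?I \<Longrightarrow> l < (Suc k)^2" unfolding Dc_def by auto
  have J: "\<And>l. l \<in> ?J \<Longrightarrow> l < (Suc (Suc k))^2" unfolding Dc_def by auto
  have disj: "?f ` ?I \<inter> ?g ` ?J = {}"
  proof -
    { fix l l' assume "l \<in> ?I" "P k + 2*l = P (Suc k) + 2*l'"
      then have False using I[of l] by simp }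
    then show ?thesis by (auto simp del: P.simps) (metis P.simps(2))
  qed
  have "Cov c sel (P (Suc k) + r) = sum (\<lambda>p. c (stg p)) (?f ` ?I \<union> ?g ` ?J)"
    unfolding Cov_def using cov_set[OF selD r refl] by simp
  also have "\<dots> = sum (\<lambda>p. c (stg p)) (?f ` ?I) + sum (\<lambda>p. c (stg p)) (?g ` ?J)"
    by (rule sum.union_disjoint) (use disj in auto)
  also have "sum (\<lambda>p. c (stg p)) (?f ` ?I) = sum (\<lambda>l. c (stg (?f l))) ?I"
    by (rule sum.reindex_cong[where l = ?f]) (auto simp: inj_on_def)
  also have "\<dots> = sum (\<lambda>l. c k) ?I" using I stg_st by (intro sum.cong) auto
  also have "sum (\<lambda>p. c (stg p)) (?g ` ?J) = sum (\<lambda>l. c (stg (?g l))) ?J"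
    by (rule sum.reindex_cong[where l = ?g]) (auto simp: inj_on_def)
  also have "\<dots> = sum (\<lambda>l. c (Suc k)) ?J"
  proof (intro sum.cong refl)
    fix l assume "l \<in> ?J"
    then show "c (stg (?g l)) = c (Suc k)" using J[of l] stg_st[of l "Suc k"] by simp
  qed
  finally show ?thesis by (simp add: mult.commute)
qed



lemma min_bound:
  fixes c c' :: real and D D' h :: nat
  assumes "0 \<le> c'" "c' \<le> c"
  shows "\<bar>c' * min D' h - c * min D h\<bar> \<le> \<bar>c' * D' - c * D\<bar> + (c - c') * D"
proof (cases "h \<le> D")
  case True
  note hD = True
  show ?thesis
  proof (cases "h \<le> D'")
    case True
    have m: "min D' h = h" "min D h = h" using True hD by auto
    have "(c - c') * h \<le> (c - c') * D" using hD assms by (intro mult_left_mono) auto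
    moreover have "0 \<le> (c - c') * h" using assms by simp
    moreover have "c' * h \<le> c * h" using assms by (intro mult_right_mono) auto
    moreover have "(c - c') * h = c * h - c' * h" by (simp add: algebra_simps)
    ultimately show ?thesis unfolding m by linarith
  next
    case False
    have m: "min D' h = D'" "min D h = h" using False hD by auto
    have a: "c * h \<le> c * D" using hD assms by (intro mult_left_mono) auto
    have b: "c' * D' \<le> c' * h" using False assms by (intro mult_left_mono) auto
    have b2: "c' * h \<le> c * h" using assms by (intro mult_right_mono) auto
    have "0 \<le> (c - c') * D" using assms by simp
    then show ?thesis unfolding m using a b b2 by linarith
  qed
next
  case False
  note hD = False
  show ?thesis
  proof (cases "h \<le> D'")
    case True
    have m: "min D' h = h" "min D h = D" using True hD by auto
    have a: "c' * D \<le> c' * h" using hD assms by (intro mult_left_mono) auto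
    have b: "c' * h \<le> c' * D'" using True assms by (intro mult_left_mono) auto
    have "0 \<le> (c - c') * D" using assms by simp
    moreover have "(c - c') * D = c * D - c' * D" by (simp add: algebra_simps)
    ultimately show ?thesis unfolding m using a b by linarith
  next
    case False
    have m: "min D' h = D'" "min D h = D" using False hD by auto
    have "0 \<le> (c - c') * D" using assms by simp
    then show ?thesis unfolding m by linarith
  qed
qed

lemma cov_bound:
  fixes c c' L :: real and D D' h h' :: nat
  assumes "0 \<le> c'" "c' \<le> c" "h \<le> h'" "h' \<le> Suc h"
  shows "\<bar>c * real (D - h) + c' * real (min D' h') - L\<bar> \<le>
     \<bar>c * D - L\<bar> + c' + \<bar>c' * D' - c * D\<bar> + (c - c') * D"
proof -
  have e1: "c * real (D - h) = c * real D - c * real (min D h)"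
    by (simp add: min_def of_nat_diff algebra_simps)
  have m1: "real (min D' h) \<le> real (min D' h')" using assms by simp
  have m2: "real (min D' h') \<le> real (min D' h) + 1" using assms by (simp add: min_def)
  have c1: "c' * real (min D' h) \<le> c' * real (min D' h')" using m1 assms by (intro mult_left_mono) auto
  have c2: "c' * real (min D' h') \<le> c' * real (min D' h) + c'" using m2 assms
    by (metis distrib_left mult.right_neutral mult_left_mono)
  have mb: "\<bar>c' * min D' h - c * min D h\<bar> \<le> \<bar>c' * D' - c * D\<bar> + (c - c') * D"
    using min_bound assms by blast
  show ?thesis unfolding e1 using c1 c2 mb by linarith
qed

lemma stg_tendsto: "filterlim stg at_top sequentially"
proof (subst filterlim_at_top, intro allI)
  fix Z
  show "eventually (\<lambda>T. Z \<le> stg T) sequentially"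
  proof (rule eventually_sequentiallyI[of "P Z"])
    fix T assume T: "P Z \<le> T"
    show "Z \<le> stg T"
    proof (rule ccontr)
      assume "\<not> Z \<le> stg T"
      then have "P (Suc (stg T)) \<le> P Z" using P_less by simp
      then show False using stg_bounds[of T] T by linarith
    qed
  qed
qed


lemma cov_lim:
  fixes c :: "nat \<Rightarrow> real" and L :: real
  assumes selD: "\<And>p. even p \<Longrightarrow> sel p \<longleftrightarrow> lpos p < Ds (stg p)"
    and cn: "\<And>k. 0 \<le> c k" and cm: "\<And>k. c (Suc k) \<le> c k"
    and c0: "c \<longlonglongrightarrow> 0"
    and cL: "(\<lambda>k. c k * Dc Ds k) \<longlonglongrightarrow> L"
    and cd: "(\<lambda>k. (c k - c (Suc k)) * Dc Ds k) \<longlonglongrightarrow> 0"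
  shows "(\<lambda>T. Cov c sel T) \<longlonglongrightarrow> L"
proof -
  define e where "e k = \<bar>c k * Dc Ds k - L\<bar> + c (Suc k) + \<bar>c (Suc k) * Dc Ds (Suc k) - c k * Dc Ds k\<bar>
       + (c k - c (Suc k)) * Dc Ds k" for k
  have cL': "(\<lambda>k. c (Suc k) * Dc Ds (Suc k)) \<longlonglongrightarrow> L" using cL by (rule LIMSEQ_Suc)
  have e0: "e \<longlonglongrightarrow> 0"
  proof -
    have a: "(\<lambda>k. \<bar>c k * Dc Ds k - L\<bar>) \<longlonglongrightarrow> 0"
    proof -
      have "(\<lambda>k. c k * Dc Ds k - L) \<longlonglongrightarrow> 0" using tendsto_diff[OF cL tendsto_const[of L]] by simp
      then show ?thesis using tendsto_rabs_zero by fastforce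
    qed
    have b: "(\<lambda>k. c (Suc k)) \<longlonglongrightarrow> 0" using c0 by (rule LIMSEQ_Suc)
    have d: "(\<lambda>k. \<bar>c (Suc k) * Dc Ds (Suc k) - c k * Dc Ds k\<bar>) \<longlonglongrightarrow> 0"
    proof -
      have "(\<lambda>k. c (Suc k) * Dc Ds (Suc k) - c k * Dc Ds k) \<longlonglongrightarrow> 0"
        using tendsto_diff[OF cL' cL] by simp
      then show ?thesis by (rule tendsto_rabs_zero)
    qed
    have "e \<longlonglongrightarrow> 0 + 0 + 0 + 0" unfolding e_def
      using tendsto_add[OF tendsto_add[OF tendsto_add[OF a b] d] cd] by simp
    then show ?thesis by simp
  qed
  have f: "filterlim (\<lambda>T. stg T - 1) at_top sequentially"
    using filterlim_compose[OF filterlim_minus_const_nat_at_top stg_tendsto] by simp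
  have eT: "(\<lambda>T. e (stg T - 1)) \<longlonglongrightarrow> 0"
    using filterlim_compose[OF e0 f] by simp
  have ev: "eventually (\<lambda>T. norm (Cov c sel T - L) \<le> e (stg T - 1)) sequentially"
  proof (rule eventually_sequentiallyI[of "P 1"])
    fix T assume T: "P 1 \<le> T"
    have "1 \<le> stg T"
    proof (rule ccontr)
      assume "\<not> 1 \<le> stg T"
      then have "stg T = 0" by simp
      then show False using stg_bounds[of T] T by simp
    qed
    then obtain k where k: "stg T = Suc k" by (cases "stg T") auto
    define r where "r = T - P (Suc k)"
    have b1: "P (Suc k) \<le> T" "T < P (Suc (Suc k))" using stg_bounds[of T] unfolding k by blast+
    have Tr: "T = P (Suc k) + r" using b1 unfolding r_def by linarith
    have "P (Suc (Suc k)) = P (Suc k) + 2 * (Suc (Suc k))^2" by (rule P.simps(2))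
    then have r: "r < 2 * (Suc (Suc k))^2" using b1 unfolding r_def by linarith
    have "Cov c sel T = c k * real (Dc Ds k - r div 2) + c (Suc k) * real (min (Dc Ds (Suc k)) ((r+1) div 2))"
      by (subst Tr) (rule cov_formula[OF selD r])
    moreover have "\<bar>c k * real (Dc Ds k - r div 2) + c (Suc k) * real (min (Dc Ds (Suc k)) ((r+1) div 2)) - L\<bar> \<le> e k"
      unfolding e_def by (rule cov_bound) (use cn cm in \<open>auto simp del: P.simps\<close>)
    ultimately show "norm (Cov c sel T - L) \<le> e (stg T - 1)" using k by simp
  qed
  have "(\<lambda>T. Cov c sel T - L) \<longlonglongrightarrow> 0" by (rule Lim_null_comparison[OF ev eT])
  then show ?thesis by (rule LIM_zero_cancel)
qed



lemma key:
  fixes \<sigma> prt :: "nat \<Rightarrow> nat" and f :: "nat \<Rightarrow> real"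
  assumes b: "bij \<sigma>" and pp: "\<And>n. prt (prt n) = n"
    and loc: "\<And>n. Ka \<le> n \<Longrightarrow> \<sigma> n = n \<or> \<sigma> n = prt n"
    and Kb: "\<And>i. i < Ka \<Longrightarrow> i < Kb \<and> \<sigma> i < Kb \<and> prt i < Kb \<and> prt (\<sigma> i) < Kb"
    and N: "Kb \<le> N"
  shows "(\<Sum>n<N. f n - f (\<sigma> n)) = (\<Sum>i\<in>{i. i < N \<and> \<sigma> i = prt i \<and> N \<le> prt i}. f i - f (prt i))"
proof -
  let ?A = "{..<N}" and ?B = "\<sigma> ` {..<N}" and ?W = "{i. i < N \<and> \<sigma> i = prt i \<and> N \<le> prt i}"
  have inj: "inj \<sigma>" using b bij_is_inj by auto
  have KaKb: "\<And>i. i < Ka \<Longrightarrow> i < Kb" using Kb by blast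
  have AB: "?A - ?B = ?W"
  proof
    show "?A - ?B \<subseteq> ?W"
    proof
      fix i assume i: "i \<in> ?A - ?B"
      obtain j where j: "\<sigma> j = i" using b by (metis bij_pointE)
      have jN: "N \<le> j" using i j by (metis Diff_iff imageI lessThan_iff not_le)
      have "Ka \<le> j" using jN N KaKb by (meson le_trans not_le)
      then have "\<sigma> j = j \<or> \<sigma> j = prt j" by (rule loc)
      moreover have "i \<noteq> j" using i jN by simp
      ultimately have ij: "i = prt j" using j by auto
      then have ji: "j = prt i" using pp by simp
      have "Ka \<le> i"
      proof (rule ccontr)
        assume "\<not> Ka \<le> i"
        then have "prt i < Kb" using Kb by simp
        then show False using ji jN N by linarith
      qed
      then have "\<sigma> i = i \<or> \<sigma> i = prt i" by (rule loc)
      moreover have "\<sigma> i \<noteq> i" using j \<open>i \<noteq> j\<close> inj by (metis injD)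
      ultimately have "\<sigma> i = prt i" by simp
      then show "i \<in> ?W" using i ji jN by simp
    qed
  next
    show "?W \<subseteq> ?A - ?B"
    proof
      fix i assume i: "i \<in> ?W"
      have "i \<notin> ?B"
      proof
        assume "i \<in> ?B"
        then obtain i' where i': "i' < N" "\<sigma> i' = i" by auto
        show False
        proof (cases "i' < Ka")
          case True
          then have "prt (\<sigma> i') < Kb" using Kb by blast
          then show False using i i' N by auto
        next
          case False
          then have "\<sigma> i' = i' \<or> \<sigma> i' = prt i'" using loc by simp
          then show False
          proof
            assume "\<sigma> i' = i'"
            then have "\<sigma> i = i" using i' by simp
            then show False using i by auto
          next
            assume "\<sigma> i' = prt i'"
            then have "i' = prt i" using i' pp by metis
            then show False using i i' by auto
          qed
        qed
      qed
      then show "i \<in> ?A - ?B" using i by simp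
    qed
  qed
  have BA: "?B - ?A = prt ` ?W"
  proof
    show "?B - ?A \<subseteq> prt ` ?W"
    proof
      fix j assume j: "j \<in> ?B - ?A"
      then obtain i where i: "i < N" "\<sigma> i = j" "N \<le> j" by auto
      have "Ka \<le> i"
      proof (rule ccontr)
        assume "\<not> Ka \<le> i"
        then have "\<sigma> i < Kb" using Kb by simp
        then show False using i N by linarith
      qed
      then have "\<sigma> i = i \<or> \<sigma> i = prt i" by (rule loc)
      then have "\<sigma> i = prt i" using i by auto
      then have "i \<in> ?W" using i by simp
      moreover have "j = prt i" using i \<open>\<sigma> i = prt i\<close> by simp
      ultimately show "j \<in> prt ` ?W" by blast
    qed
  next
    show "prt ` ?W \<subseteq> ?B - ?A"
    proof
      fix j assume "j \<in> prt ` ?W"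
      then obtain i where i: "i \<in> ?W" "j = prt i" by blast
      then have "j = \<sigma> i" by simp
      then show "j \<in> ?B - ?A" using i by auto
    qed
  qed
  have injp: "inj prt" by (metis injI pp)
  have fin: "finite ?W" by (rule finite_subset[of _ "{..<N}"]) auto
  have "(\<Sum>n<N. f n - f (\<sigma> n)) = (\<Sum>n<N. f n) - (\<Sum>n<N. f (\<sigma> n))" by (simp add: sum_subtractf)
  also have "(\<Sum>n<N. f (\<sigma> n)) = sum f ?B"
    by (rule sum.reindex[symmetric, unfolded comp_def]) (use inj in \<open>auto simp: inj_on_def\<close>)
  also have "(\<Sum>n<N. f n) = sum f (?A \<inter> ?B) + sum f (?A - ?B)" by (rule sum.Int_Diff) simp
  also have "sum f ?B = sum f (?B \<inter> ?A) + sum f (?B - ?A)" by (rule sum.Int_Diff) simp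
  also have "?B \<inter> ?A = ?A \<inter> ?B" by blast
  also have "sum f (?B - ?A) = sum (\<lambda>i. f (prt i)) ?W"
    unfolding BA by (rule sum.reindex[unfolded comp_def]) (use injp in \<open>auto simp: inj_on_def\<close>)
  finally show ?thesis unfolding AB by (simp add: sum_subtractf)
qed



definition gprt :: "nat \<Rightarrow> nat" where "gprt n = 2 * tprt (n div 2) + n mod 2"

definition cpos :: "nat \<Rightarrow> real" where "cpos k = 1 / real (Suc k)"
definition cneg :: "real \<Rightarrow> nat \<Rightarrow> real" where "cneg a k = \<bar>a\<bar> / (real (Suc k))^2"

definition bump :: "real \<Rightarrow> nat \<Rightarrow> real" where
  "bump a n = (let p = n div 2 in if even p then (if odd n then cpos (stg p) else 0)
      else (if even n \<and> tprt p \<noteq> p then cneg a (stg (tprt p)) else 0))"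

definition yv :: "real \<Rightarrow> nat \<Rightarrow> real" where
  "yv a n = (\<bar>a\<bar> + 3) * real (min n (gprt n)) + bump a n"

lemma gprt_gprt: "gprt (gprt n) = n"
  unfolding gprt_def by (simp add: tprt_tprt)

lemma gprt_div: "gprt n div 2 = tprt (n div 2)" "gprt n mod 2 = n mod 2"
  unfolding gprt_def by auto

lemma start_iff: "n < gprt n \<longleftrightarrow> even (n div 2)"
proof -
  have n: "n = 2 * (n div 2) + n mod 2" by simp
  have "n mod 2 < 2" by simp
  show ?thesis
  proof (cases "even (n div 2)")
    case True
    then have "n div 2 < tprt (n div 2)" by (rule tprt_even)
    then show ?thesis using True n \<open>n mod 2 < 2\<close> unfolding gprt_def by linarith
  next
    case False
    then have "tprt (n div 2) \<le> n div 2" by (rule tprt_odd_le)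
    then show ?thesis using False n \<open>n mod 2 < 2\<close> unfolding gprt_def by linarith
  qed
qed

lemma cpos_bounds: "0 \<le> cpos k" "cpos k \<le> 1"
  unfolding cpos_def by auto

lemma cneg_bounds: "0 \<le> cneg a k" "cneg a k \<le> \<bar>a\<bar>"
proof -
  show "0 \<le> cneg a k" unfolding cneg_def by simp
  have "1 \<le> (real (Suc k))^2" by simp
  then have "\<bar>a\<bar> / (real (Suc k))^2 \<le> \<bar>a\<bar> / 1" by (intro divide_left_mono) auto
  then show "cneg a k \<le> \<bar>a\<bar>" unfolding cneg_def by simp
qed

lemma bump_bounds: "0 \<le> bump a n" "bump a n \<le> 1 + \<bar>a\<bar>"
  unfolding bump_def Let_def using cpos_bounds cneg_bounds[of a]
  by (auto simp: add_increasing add_increasing2)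

lemma separation:
  assumes "\<bar>yv a i - yv a j\<bar> < 1" shows "j = i \<or> j = gprt i"
proof -
  let ?C = "\<bar>a\<bar> + 3"
  define X where "X = ?C * (real (min i (gprt i)) - real (min j (gprt j)))"
  define e where "e = bump a i - bump a j"
  have d: "yv a i - yv a j = X + e" unfolding X_def e_def yv_def by (simp add: algebra_simps)
  have eb: "\<bar>e\<bar> \<le> 1 + \<bar>a\<bar>" unfolding e_def using bump_bounds[of a i] bump_bounds[of a j]
    by (simp add: abs_le_iff)
  have tri: "\<bar>X\<bar> \<le> \<bar>X + e\<bar> + \<bar>e\<bar>"
    using abs_triangle_ineq[of "X + e" "- e"] by simp
  have m: "min i (gprt i) = min j (gprt j)"
  proof (rule ccontr)
    assume ne: "min i (gprt i) \<noteq> min j (gprt j)"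
    have one: "1 \<le> \<bar>real (min i (gprt i)) - real (min j (gprt j))\<bar>" using ne by linarith
    have "\<bar>X\<bar> = ?C * \<bar>real (min i (gprt i)) - real (min j (gprt j))\<bar>"
      unfolding X_def abs_mult by simp
    moreover have "?C * 1 \<le> ?C * \<bar>real (min i (gprt i)) - real (min j (gprt j))\<bar>"
      using one by (intro mult_left_mono) auto
    ultimately have "?C \<le> \<bar>X\<bar>" by simp
    then show False using assms d eb tri by linarith
  qed
  show ?thesis
  proof (cases "i \<le> gprt i")
    case True
    then have "min j (gprt j) = i" using m by simp
    then show ?thesis by (metis gprt_gprt min_def)
  next
    case False
    then have "min j (gprt j) = gprt i" using m by simp
    then show ?thesis by (metis gprt_gprt min_def)
  qed
qed

lemma gain:
  assumes "n < gprt n"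
  shows "yv a n - yv a (gprt n) = (if odd n then cpos (stg (n div 2)) else - cneg a (stg (n div 2)))"
proof -
  let ?p = "n div 2"
  have ev: "even ?p" using assms start_iff by simp
  have mins: "min n (gprt n) = min (gprt n) (gprt (gprt n))" by (simp add: gprt_gprt min.commute)
  have b1: "bump a n = (if odd n then cpos (stg ?p) else 0)" unfolding bump_def Let_def using ev by simp
  have q: "gprt n div 2 = tprt ?p" "odd (tprt ?p)" "tprt (tprt ?p) = ?p" "tprt (tprt ?p) \<noteq> tprt ?p"
    using gprt_div tprt_even[OF ev] tprt_tprt ev by auto
  have pe: "even (gprt n) \<longleftrightarrow> even n" using gprt_div(2) by (metis even_iff_mod_2_eq_zero)
  have b2: "bump a (gprt n) = (if even n then cneg a (stg ?p) else 0)"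
    unfolding bump_def Let_def using q pe by simp
  show ?thesis unfolding yv_def mins[symmetric] using b1 b2 by simp
qed



definition Dt :: "real \<Rightarrow> nat \<Rightarrow> nat" where "Dt t k = nat \<lfloor>t * real (Suc k)\<rfloor>"
definition selp :: "real \<Rightarrow> nat \<Rightarrow> bool" where "selp t p = (lpos p < Dt t (stg p))"
definition sig :: "real \<Rightarrow> nat \<Rightarrow> nat" where
  "sig t n = (if gprt n \<noteq> n \<and> (even (min n (gprt n)) \<or> selp t (min n (gprt n) div 2)) then gprt n else n)"

lemma sig_inv: "sig t (sig t n) = n"
proof (cases "gprt n \<noteq> n \<and> (even (min n (gprt n)) \<or> selp t (min n (gprt n) div 2))")
  case True
  then have s: "sig t n = gprt n" unfolding sig_def by simp
  have m: "min (gprt n) (gprt (gprt n)) = min n (gprt n)" by (simp add: gprt_gprt min.commute)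
  have "gprt (gprt n) \<noteq> gprt n" using True gprt_gprt by metis
  then show ?thesis unfolding s using True m by (simp add: sig_def gprt_gprt)
next
  case False
  then show ?thesis unfolding sig_def by auto
qed

lemma sig_bij: "bij (sig t)"
  by (rule o_bij[of "sig t"]) (auto simp: sig_inv)

lemma sig_loc: "sig t n = n \<or> sig t n = gprt n"
  unfolding sig_def by auto

lemma sig_W: "{i. i < N \<and> sig t i = gprt i \<and> N \<le> gprt i} =
   {i. i < N \<and> i < gprt i \<and> N \<le> gprt i \<and> (even i \<or> selp t (i div 2))}"
proof -
  have "\<And>i. i < N \<Longrightarrow> N \<le> gprt i \<Longrightarrow> sig t i = gprt i \<longleftrightarrow> (even i \<or> selp t (i div 2))"
  proof -
    fix i assume i: "i < N" "N \<le> gprt i"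
    then have "i < gprt i" by simp
    then have "gprt i \<noteq> i" "min i (gprt i) = i" by auto
    then show "sig t i = gprt i \<longleftrightarrow> (even i \<or> selp t (i div 2))" unfolding sig_def by auto
  qed
  then show ?thesis by (auto intro: less_le_trans)
qed

lemma parity_split:
  fixes f :: "nat \<Rightarrow> real"
  assumes "finite W"
  shows "sum f W = sum (\<lambda>p. f (2*p)) {p. 2*p \<in> W} + sum (\<lambda>p. f (2*p+1)) {p. 2*p+1 \<in> W}"
proof -
  have W: "W = (\<lambda>p. 2*p) ` {p. 2*p \<in> W} \<union> (\<lambda>p. 2*p+1) ` {p. 2*p+1 \<in> W}"
  proof
    show "W \<subseteq> (\<lambda>p. 2*p) ` {p. 2*p \<in> W} \<union> (\<lambda>p. 2*p+1) ` {p. 2*p+1 \<in> W}"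
    proof
      fix i assume i: "i \<in> W"
      show "i \<in> (\<lambda>p. 2*p) ` {p. 2*p \<in> W} \<union> (\<lambda>p. 2*p+1) ` {p. 2*p+1 \<in> W}"
      proof (cases "even i")
        case True
        then obtain p where "i = 2*p" by blast
        then show ?thesis using i by auto
      next
        case False
        then obtain p where "i = 2*p+1" by (metis oddE)
        then show ?thesis using i by auto
      qed
    qed
  qed auto
  have f1: "finite {p. 2*p \<in> W}" using assms by (rule finite_vimageI[of _ "\<lambda>p. 2*p", unfolded vimage_def]) (auto simp: inj_on_def)
  have f2: "finite {p. 2*p+1 \<in> W}" using assms by (rule finite_vimageI[of _ "\<lambda>p. 2*p+1", unfolded vimage_def]) (auto simp: inj_on_def)
  have "sum f W = sum f ((\<lambda>p. 2*p) ` {p. 2*p \<in> W}) + sum f ((\<lambda>p. 2*p+1) ` {p. 2*p+1 \<in> W})"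
    by (subst W, rule sum.union_disjoint) (use f1 f2 in \<open>auto, presburger\<close>)
  also have "sum f ((\<lambda>p. 2*p) ` {p. 2*p \<in> W}) = sum (\<lambda>p. f (2*p)) {p. 2*p \<in> W}"
    by (rule sum.reindex[unfolded comp_def]) (auto simp: inj_on_def)
  also have "sum f ((\<lambda>p. 2*p+1) ` {p. 2*p+1 \<in> W}) = sum (\<lambda>p. f (2*p+1)) {p. 2*p+1 \<in> W}"
    by (rule sum.reindex[unfolded comp_def]) (auto simp: inj_on_def)
  finally show ?thesis .
qed

lemma gprt2: "gprt (2*p) = 2 * tprt p" "gprt (2*p+1) = 2 * tprt p + 1"
  unfolding gprt_def by auto

lemma start2: "2*p < gprt (2*p) \<longleftrightarrow> even p" "2*p+1 < gprt (2*p+1) \<longleftrightarrow> even p"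
  using start_iff[of "2*p"] start_iff[of "2*p+1"] by auto

lemma S_sig:
  "(\<Sum>n<N. yv a n - yv a (sig t n)) =
     sum (\<lambda>p. cpos (stg p)) {p. 2*p+1 < N \<and> even p \<and> selp t p \<and> N \<le> 2 * tprt p + 1}
   - sum (\<lambda>p. cneg a (stg p)) {p. 2*p < N \<and> even p \<and> N \<le> 2 * tprt p}"
proof -
  let ?W = "{i. i < N \<and> i < gprt i \<and> N \<le> gprt i \<and> (even i \<or> selp t (i div 2))}"
  have "(\<Sum>n<N. yv a n - yv a (sig t n)) = (\<Sum>i\<in>{i. i < N \<and> sig t i = gprt i \<and> N \<le> gprt i}. yv a i - yv a (gprt i))"
    by (rule key[where Ka = 0 and Kb = 0]) (auto simp: sig_bij gprt_gprt sig_loc)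
  also have "\<dots> = (\<Sum>i\<in>?W. yv a i - yv a (gprt i))" unfolding sig_W ..
  also have "\<dots> = sum (\<lambda>p. yv a (2*p) - yv a (gprt (2*p))) {p. 2*p \<in> ?W}
       + sum (\<lambda>p. yv a (2*p+1) - yv a (gprt (2*p+1))) {p. 2*p+1 \<in> ?W}"
    by (rule parity_split) (rule finite_subset[of _ "{..<N}"], auto)
  also have "{p. 2*p \<in> ?W} = {p. 2*p < N \<and> even p \<and> N \<le> 2 * tprt p}"
    using start2 gprt2 by auto
  also have "{p. 2*p+1 \<in> ?W} = {p. 2*p+1 < N \<and> even p \<and> selp t p \<and> N \<le> 2 * tprt p + 1}"
    using start2 gprt2 by auto
  also have "sum (\<lambda>p. yv a (2*p) - yv a (gprt (2*p))) {p. 2*p < N \<and> even p \<and> N \<le> 2 * tprt p}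
      = sum (\<lambda>p. - cneg a (stg p)) {p. 2*p < N \<and> even p \<and> N \<le> 2 * tprt p}"
  proof (rule sum.cong[OF refl])
    fix p assume "p \<in> {p. 2*p < N \<and> even p \<and> N \<le> 2 * tprt p}"
    then have "2*p < gprt (2*p)" using start2 by simp
    then show "yv a (2*p) - yv a (gprt (2*p)) = - cneg a (stg p)" using gain by simp
  qed
  also have "sum (\<lambda>p. yv a (2*p+1) - yv a (gprt (2*p+1))) {p. 2*p+1 < N \<and> even p \<and> selp t p \<and> N \<le> 2 * tprt p + 1}
      = sum (\<lambda>p. cpos (stg p)) {p. 2*p+1 < N \<and> even p \<and> selp t p \<and> N \<le> 2 * tprt p + 1}"
  proof (rule sum.cong[OF refl])
    fix p assume "p \<in> {p. 2*p+1 < N \<and> even p \<and> selp t p \<and> N \<le> 2 * tprt p + 1}"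
    then have "2*p+1 < gprt (2*p+1)" using start2 by simp
    then show "yv a (2*p+1) - yv a (gprt (2*p+1)) = cpos (stg p)" using gain by simp
  qed
  finally show ?thesis by (simp add: sum_negf)
qed

lemma low_sum:
  "sum (\<lambda>i. min 0 (yv a i - yv a (gprt i))) {i. i < N \<and> i < gprt i \<and> N \<le> gprt i}
    = - sum (\<lambda>p. cneg a (stg p)) {p. 2*p < N \<and> even p \<and> N \<le> 2 * tprt p}"
proof -
  let ?W = "{i. i < N \<and> i < gprt i \<and> N \<le> gprt i}"
  have "sum (\<lambda>i. min 0 (yv a i - yv a (gprt i))) ?W
     = sum (\<lambda>p. min 0 (yv a (2*p) - yv a (gprt (2*p)))) {p. 2*p \<in> ?W}
       + sum (\<lambda>p. min 0 (yv a (2*p+1) - yv a (gprt (2*p+1)))) {p. 2*p+1 \<in> ?W}"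
    by (rule parity_split) (rule finite_subset[of _ "{..<N}"], auto)
  also have "{p. 2*p \<in> ?W} = {p. 2*p < N \<and> even p \<and> N \<le> 2 * tprt p}"
    using start2 gprt2 by auto
  also have "sum (\<lambda>p. min 0 (yv a (2*p) - yv a (gprt (2*p)))) {p. 2*p < N \<and> even p \<and> N \<le> 2 * tprt p}
      = sum (\<lambda>p. - cneg a (stg p)) {p. 2*p < N \<and> even p \<and> N \<le> 2 * tprt p}"
  proof (rule sum.cong[OF refl])
    fix p assume "p \<in> {p. 2*p < N \<and> even p \<and> N \<le> 2 * tprt p}"
    then have "2*p < gprt (2*p)" using start2 by simp
    then show "min 0 (yv a (2*p) - yv a (gprt (2*p))) = - cneg a (stg p)" using gain cneg_bounds[of a] by simp
  qed
  also have "sum (\<lambda>p. min 0 (yv a (2*p+1) - yv a (gprt (2*p+1)))) {p. 2*p+1 \<in> ?W} = 0"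
  proof (rule sum.neutral, intro ballI)
    fix p assume "p \<in> {p. 2*p+1 \<in> ?W}"
    then have "2*p+1 < gprt (2*p+1)" by simp
    then show "min 0 (yv a (2*p+1) - yv a (gprt (2*p+1))) = 0" using gain cpos_bounds by simp
  qed
  finally show ?thesis by (simp add: sum_negf)
qed



lemma Dc_sq: "Dc (\<lambda>k. (Suc k)^2) k = (Suc k)^2" unfolding Dc_def by simp

lemma selD_true: "even p \<Longrightarrow> True \<longleftrightarrow> lpos p < (\<lambda>k. (Suc k)^2) (stg p)"
proof -
  assume "even p"
  then obtain l where l: "p = P (stg p) + 2*l" "l < (Suc (stg p))^2" by (rule even_decomp)
  then have "lpos p = l" using lpos_st by metis
  then show ?thesis using l by simp
qed

lemma neg_lim: "(\<lambda>T. Cov (cneg a) (\<lambda>_. True) T) \<longlonglongrightarrow> \<bar>a\<bar>"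
proof (rule cov_lim[where Ds = "\<lambda>k. (Suc k)^2"])
  show "\<And>p. even p \<Longrightarrow> True \<longleftrightarrow> lpos p < (Suc (stg p))^2" using selD_true by simp
  show "\<And>k. 0 \<le> cneg a k" by (rule cneg_bounds)
  show "\<And>k. cneg a (Suc k) \<le> cneg a k"
    unfolding cneg_def by (intro divide_left_mono) (auto intro: power_mono)
  have i: "(\<lambda>k. inverse (real (Suc k))) \<longlonglongrightarrow> 0" by (rule LIMSEQ_inverse_real_of_nat)
  have "(\<lambda>k. \<bar>a\<bar> * (inverse (real (Suc k)))^2) \<longlonglongrightarrow> \<bar>a\<bar> * 0^2"
    by (intro tendsto_mult tendsto_const tendsto_power i)
  moreover have "cneg a = (\<lambda>k. \<bar>a\<bar> * (inverse (real (Suc k)))^2)"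
    by (rule ext) (simp add: cneg_def divide_inverse power_inverse)
  ultimately show "cneg a \<longlonglongrightarrow> 0" by simp
  show "(\<lambda>k. cneg a k * real (Dc (\<lambda>k. (Suc k)^2) k)) \<longlonglongrightarrow> \<bar>a\<bar>"
    unfolding Dc_sq cneg_def by simp
  have q: "(\<lambda>k. real (Suc k) / real (Suc (Suc k))) \<longlonglongrightarrow> 1"
    using LIMSEQ_Suc[OF LIMSEQ_n_over_Suc_n] by simp
  have "(\<lambda>k. \<bar>a\<bar> - \<bar>a\<bar> * (real (Suc k) / real (Suc (Suc k)))^2) \<longlonglongrightarrow> \<bar>a\<bar> - \<bar>a\<bar> * 1^2"
    by (intro tendsto_diff tendsto_mult tendsto_const tendsto_power q)
  moreover have "\<And>k. (cneg a k - cneg a (Suc k)) * real (Dc (\<lambda>k. (Suc k)^2) k)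
        = \<bar>a\<bar> - \<bar>a\<bar> * (real (Suc k) / real (Suc (Suc k)))^2"
    unfolding Dc_sq cneg_def by (simp add: field_simps power_divide)
  ultimately show "(\<lambda>k. (cneg a k - cneg a (Suc k)) * real (Dc (\<lambda>k. (Suc k)^2) k)) \<longlonglongrightarrow> 0"
    by simp
qed

lemma Dt_le: assumes "0 \<le> t" shows "real (Dc (Dt t) k) \<le> t * real (Suc k)"
proof -
  have "real (Dc (Dt t) k) \<le> real (Dt t k)" unfolding Dc_def by simp
  also have "\<dots> \<le> t * real (Suc k)"
  proof -
    have x0: "0 \<le> t * real (Suc k)" using assms by simp
    then have "real (Dt t k) = real_of_int \<lfloor>t * real (Suc k)\<rfloor>" unfolding Dt_def by simp
    then show ?thesis using floor_correct[of "t * real (Suc k)"] by linarith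
  qed
  finally show ?thesis .
qed

lemma Dt_ge: assumes "0 \<le> t" "t \<le> real (Suc k)" shows "t * real (Suc k) - 1 \<le> real (Dc (Dt t) k)"
proof -
  let ?x = "t * real (Suc k)"
  have x0: "0 \<le> ?x" using assms by simp
  have "?x \<le> real (Suc k) * real (Suc k)" by (rule mult_right_mono) (use assms in auto)
  then have "?x \<le> real ((Suc k)^2)" by (simp only: of_nat_power power2_eq_square of_nat_mult)
  then have "\<lfloor>?x\<rfloor> \<le> \<lfloor>real ((Suc k)^2)\<rfloor>" by (rule floor_mono)
  then have fl: "\<lfloor>?x\<rfloor> \<le> int ((Suc k)^2)" by (simp only: floor_of_nat)
  have "nat \<lfloor>?x\<rfloor> \<le> (Suc k)^2" using fl by (simp add: nat_le_iff)
  then have "Dc (Dt t) k = nat \<lfloor>?x\<rfloor>" unfolding Dc_def Dt_def by simp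
  moreover have "real (nat \<lfloor>?x\<rfloor>) = real_of_int \<lfloor>?x\<rfloor>" using x0 by simp
  moreover have "?x < real_of_int \<lfloor>?x\<rfloor> + 1" using floor_correct[of ?x] by simp
  ultimately show ?thesis by linarith
qed

lemma pos_lim: assumes t: "0 \<le> t" shows "(\<lambda>T. Cov cpos (selp t) T) \<longlonglongrightarrow> t"
proof (rule cov_lim[where Ds = "Dt t"])
  show "\<And>p. even p \<Longrightarrow> selp t p \<longleftrightarrow> lpos p < Dt t (stg p)" unfolding selp_def by simp
  show "\<And>k. 0 \<le> cpos k" by (rule cpos_bounds)
  show "\<And>k. cpos (Suc k) \<le> cpos k" unfolding cpos_def by (simp add: frac_le)
  have i: "(\<lambda>k. inverse (real (Suc k))) \<longlonglongrightarrow> 0" by (rule LIMSEQ_inverse_real_of_nat)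
  then show c0: "cpos \<longlonglongrightarrow> 0" unfolding cpos_def by (simp add: divide_inverse)
  show "(\<lambda>k. cpos k * real (Dc (Dt t) k)) \<longlonglongrightarrow> t"
  proof (rule tendsto_sandwich[where f = "\<lambda>k. t - cpos k" and h = "\<lambda>k. t"])
    show "eventually (\<lambda>k. cpos k * real (Dc (Dt t) k) \<le> t) sequentially"
    proof (intro always_eventually allI)
      fix k
      have "cpos k * real (Dc (Dt t) k) \<le> cpos k * (t * real (Suc k))"
        using Dt_le[OF t] cpos_bounds by (intro mult_left_mono) auto
      then show "cpos k * real (Dc (Dt t) k) \<le> t" unfolding cpos_def by simp
    qed
    obtain K :: nat where K: "t \<le> real K" using real_arch_simple by blast
    show "eventually (\<lambda>k. t - cpos k \<le> cpos k * real (Dc (Dt t) k)) sequentially"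
    proof (rule eventually_sequentiallyI[of K])
      fix k assume "K \<le> k"
      then have "t \<le> real (Suc k)" using K by linarith
      then have "t * real (Suc k) - 1 \<le> real (Dc (Dt t) k)" by (rule Dt_ge[OF t])
      then have "cpos k * (t * real (Suc k) - 1) \<le> cpos k * real (Dc (Dt t) k)"
        using cpos_bounds by (intro mult_left_mono) auto
      then show "t - cpos k \<le> cpos k * real (Dc (Dt t) k)" unfolding cpos_def by (simp add: field_simps)
    qed
    show "(\<lambda>k. t - cpos k) \<longlonglongrightarrow> t" using tendsto_diff[OF tendsto_const[of t] c0] by simp
  qed simp
  show "(\<lambda>k. (cpos k - cpos (Suc k)) * real (Dc (Dt t) k)) \<longlonglongrightarrow> 0"
  proof (rule tendsto_sandwich[where f = "\<lambda>k. 0" and h = "\<lambda>k. t * cpos (Suc k)"])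
    show "eventually (\<lambda>k. 0 \<le> (cpos k - cpos (Suc k)) * real (Dc (Dt t) k)) sequentially"
      unfolding cpos_def by (intro always_eventually allI mult_nonneg_nonneg) (auto simp: frac_le)
    show "eventually (\<lambda>k. (cpos k - cpos (Suc k)) * real (Dc (Dt t) k) \<le> t * cpos (Suc k)) sequentially"
    proof (intro always_eventually allI)
      fix k
      have d: "cpos k - cpos (Suc k) = cpos (Suc k) / real (Suc k)" unfolding cpos_def by (simp add: field_simps)
      have "(cpos k - cpos (Suc k)) * real (Dc (Dt t) k) \<le> (cpos k - cpos (Suc k)) * (t * real (Suc k))"
        using Dt_le[OF t] unfolding cpos_def by (intro mult_left_mono) (auto simp: frac_le)
      also have "\<dots> = t * cpos (Suc k)" unfolding d by simp
      finally show "(cpos k - cpos (Suc k)) * real (Dc (Dt t) k) \<le> t * cpos (Suc k)" .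
    qed
    show "(\<lambda>k. t * cpos (Suc k)) \<longlonglongrightarrow> 0" using tendsto_mult[OF tendsto_const[of t] LIMSEQ_Suc[OF c0]] by simp
  qed simp
qed



lemma evenodd_lim:
  fixes S :: "nat \<Rightarrow> real"
  assumes e: "(\<lambda>T. S (2*T)) \<longlonglongrightarrow> L" and o: "(\<lambda>T. S (2*T+1)) \<longlonglongrightarrow> L"
  shows "S \<longlonglongrightarrow> L"
proof (rule LIMSEQ_I)
  fix r :: real assume r: "0 < r"
  obtain M1 where M1: "\<forall>n\<ge>M1. norm (S (2*n) - L) < r" using LIMSEQ_D[OF e r] by blast
  obtain M2 where M2: "\<forall>n\<ge>M2. norm (S (2*n+1) - L) < r" using LIMSEQ_D[OF o r] by blast
  show "\<exists>no. \<forall>n\<ge>no. norm (S n - L) < r"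
  proof (intro exI allI impI)
    fix n assume n: "2 * (M1 + M2) \<le> n"
    show "norm (S n - L) < r"
    proof (cases "even n")
      case True
      then obtain m where m: "n = 2*m" by blast
      then have "M1 \<le> m" using n by simp
      then show ?thesis using M1 m by simp
    next
      case False
      then obtain m where m: "n = 2*m+1" by (metis oddE)
      then have "M2 \<le> m" using n by simp
      then show ?thesis using M2 m by simp
    qed
  qed
qed

lemma setE2: "{p. 2*p < 2*T \<and> even p \<and> 2*T \<le> 2 * tprt p} = {p. p < T \<and> even p \<and> True \<and> T \<le> tprt p}"
  by auto
lemma setE3: "{p. 2*p < 2*T+1 \<and> even p \<and> 2*T+1 \<le> 2 * tprt p} = {p. p < Suc T \<and> even p \<and> True \<and> Suc T \<le> tprt p}"
  by (rule Collect_cong) presburger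
lemma setO2: "{p. 2*p+1 < 2*T \<and> even p \<and> sl p \<and> 2*T \<le> 2 * tprt p + 1} = {p. p < T \<and> even p \<and> sl p \<and> T \<le> tprt p}"
proof (rule Collect_cong)
  fix p
  have "2*p+1 < 2*T \<longleftrightarrow> p < T" "2*T \<le> 2*tprt p+1 \<longleftrightarrow> T \<le> tprt p" by presburger+
  then show "(2*p+1 < 2*T \<and> even p \<and> sl p \<and> 2*T \<le> 2*tprt p+1) = (p < T \<and> even p \<and> sl p \<and> T \<le> tprt p)" by simp
qed
lemma setO3: "{p. 2*p+1 < 2*T+1 \<and> even p \<and> sl p \<and> 2*T+1 \<le> 2 * tprt p + 1} = {p. p < T \<and> even p \<and> sl p \<and> T \<le> tprt p}"
proof (rule Collect_cong)
  fix p
  have "2*p+1 < 2*T+1 \<longleftrightarrow> p < T" "2*T+1 \<le> 2*tprt p+1 \<longleftrightarrow> T \<le> tprt p" by presburger+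
  then show "(2*p+1 < 2*T+1 \<and> even p \<and> sl p \<and> 2*T+1 \<le> 2*tprt p+1) = (p < T \<and> even p \<and> sl p \<and> T \<le> tprt p)" by simp
qed

lemma sum_ge_min:
  fixes g :: "nat \<Rightarrow> real"
  assumes "W \<subseteq> V" "finite V"
  shows "sum (\<lambda>i. min 0 (g i)) V \<le> sum g W"
proof -
  have "sum (\<lambda>i. min 0 (g i)) V = sum (\<lambda>i. min 0 (g i)) (V - W) + sum (\<lambda>i. min 0 (g i)) W"
    by (rule sum.subset_diff[OF assms])
  also have "sum (\<lambda>i. min 0 (g i)) (V - W) \<le> 0" by (rule sum_nonpos) simp
  also have "sum (\<lambda>i. min 0 (g i)) W \<le> sum g W" by (rule sum_mono) simp
  finally show ?thesis by simp
qed

lemma lower: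
  assumes a: "a \<le> 0" and b: "bij \<sigma>" and s: "summable (\<lambda>n. yv a n - yv a (\<sigma> n))"
  shows "a \<le> (\<Sum>n. yv a n - yv a (\<sigma> n))"
proof -
  let ?f = "\<lambda>n. yv a n - yv a (\<sigma> n)"
  have "?f \<longlonglongrightarrow> 0" using s by (rule summable_LIMSEQ_zero)
  then obtain Ka where Ka: "\<forall>n\<ge>Ka. norm (?f n - 0) < 1" using LIMSEQ_D[of ?f 0 1] by auto
  have loc: "\<And>n. Ka \<le> n \<Longrightarrow> \<sigma> n = n \<or> \<sigma> n = gprt n"
  proof -
    fix n assume "Ka \<le> n"
    then have "\<bar>yv a n - yv a (\<sigma> n)\<bar> < 1" using Ka by simp
    then show "\<sigma> n = n \<or> \<sigma> n = gprt n" by (rule separation)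
  qed
  define Kb where "Kb = Suc (\<Sum>i<Ka. i + \<sigma> i + gprt i + gprt (\<sigma> i))"
  have Kb: "\<And>i. i < Ka \<Longrightarrow> i < Kb \<and> \<sigma> i < Kb \<and> gprt i < Kb \<and> gprt (\<sigma> i) < Kb"
  proof -
    fix i assume "i < Ka"
    then have "i + \<sigma> i + gprt i + gprt (\<sigma> i) \<le> (\<Sum>i<Ka. i + \<sigma> i + gprt i + gprt (\<sigma> i))"
      by (intro member_le_sum) auto
    then show "i < Kb \<and> \<sigma> i < Kb \<and> gprt i < Kb \<and> gprt (\<sigma> i) < Kb" unfolding Kb_def by linarith
  qed
  have ineq: "\<And>N. Kb \<le> N \<Longrightarrow> - sum (\<lambda>p. cneg a (stg p)) {p. 2*p < N \<and> even p \<and> N \<le> 2 * tprt p}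
      \<le> (\<Sum>n<N. ?f n)"
  proof -
    fix N assume N: "Kb \<le> N"
    have "(\<Sum>n<N. ?f n) = (\<Sum>i\<in>{i. i < N \<and> \<sigma> i = gprt i \<and> N \<le> gprt i}. yv a i - yv a (gprt i))"
      by (rule key[where Ka = Ka and Kb = Kb]) (use b loc Kb N gprt_gprt in auto)
    also have "\<dots> \<ge> sum (\<lambda>i. min 0 (yv a i - yv a (gprt i))) {i. i < N \<and> i < gprt i \<and> N \<le> gprt i}"
      by (rule sum_ge_min) (auto intro: finite_subset[of _ "{..<N}"])
    finally show "- sum (\<lambda>p. cneg a (stg p)) {p. 2*p < N \<and> even p \<and> N \<le> 2 * tprt p} \<le> (\<Sum>n<N. ?f n)"
      unfolding low_sum .
  qed
  have lim: "(\<lambda>N. \<Sum>n<N. ?f n) \<longlonglongrightarrow> (\<Sum>n. ?f n)" using s summable_sums sums_def by blast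
  have lim2: "(\<lambda>T. \<Sum>n<2*T. ?f n) \<longlonglongrightarrow> (\<Sum>n. ?f n)"
    using LIMSEQ_subseq_LIMSEQ[OF lim, of "\<lambda>T. 2*T"] by (simp add: strict_mono_def comp_def)
  have low: "(\<lambda>T. - Cov (cneg a) (\<lambda>_. True) T) \<longlonglongrightarrow> - \<bar>a\<bar>" by (intro tendsto_minus neg_lim)
  have eq: "\<And>T. Cov (cneg a) (\<lambda>_. True) T = sum (\<lambda>p. cneg a (stg p)) {p. 2*p < 2*T \<and> even p \<and> 2*T \<le> 2 * tprt p}"
    unfolding Cov_def setE2 ..
  have "- \<bar>a\<bar> \<le> (\<Sum>n. ?f n)"
  proof (rule LIMSEQ_le[OF low lim2])
    show "\<exists>M. \<forall>T\<ge>M. - Cov (cneg a) (\<lambda>_. True) T \<le> (\<Sum>n<2*T. ?f n)"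
    proof (intro exI allI impI)
      fix T assume "Kb \<le> T"
      then have "Kb \<le> 2*T" by simp
      then have "- sum (\<lambda>p. cneg a (stg p)) {p. 2*p < 2*T \<and> even p \<and> 2*T \<le> 2 * tprt p} \<le> (\<Sum>n<2*T. ?f n)"
        by (rule ineq)
      then show "- Cov (cneg a) (\<lambda>_. True) T \<le> (\<Sum>n<2*T. ?f n)" by (simp only: eq)
    qed
  qed
  then show ?thesis using a by simp
qed

lemma upper:
  assumes a: "a \<le> 0" and t: "0 \<le> t"
  shows "((\<lambda>n. yv a n - yv a (sig t n)) sums (a + t))"
proof -
  let ?S = "\<lambda>N. \<Sum>n<N. yv a n - yv a (sig t n)"
  have e: "\<And>T. ?S (2*T) = Cov cpos (selp t) T - Cov (cneg a) (\<lambda>_. True) T"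
    unfolding S_sig Cov_def setE2 setO2 ..
  have o: "\<And>T. ?S (2*T+1) = Cov cpos (selp t) T - Cov (cneg a) (\<lambda>_. True) (Suc T)"
    unfolding S_sig Cov_def setE3 setO3 ..
  have l1: "(\<lambda>T. ?S (2*T)) \<longlonglongrightarrow> t - \<bar>a\<bar>"
    unfolding e by (intro tendsto_diff pos_lim[OF t] neg_lim)
  have l2: "(\<lambda>T. ?S (2*T+1)) \<longlonglongrightarrow> t - \<bar>a\<bar>"
    unfolding o by (intro tendsto_diff pos_lim[OF t] LIMSEQ_Suc[OF neg_lim])
  have "?S \<longlonglongrightarrow> t - \<bar>a\<bar>" by (rule evenodd_lim[OF l1 l2])
  then show ?thesis unfolding sums_def using a by (simp add: add.commute)
qed

theorem mainTheorem4:
  fixes a :: real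
  assumes "a \<le> 0"
  shows "\<exists>x :: nat \<Rightarrow> real. (\<forall>n. x n > 0) \<and> \<not> summable x \<and>
    {(\<Sum>n. x n - x (\<sigma> n)) | \<sigma>. bij \<sigma> \<and> summable (\<lambda>n. x n - x (\<sigma> n))} = {a..}"
proof (intro exI conjI)
  let ?x = "\<lambda>n. 1 + yv a n"
  have y0: "\<And>n. 0 \<le> yv a n" unfolding yv_def using bump_bounds[of a] by (simp add: add_nonneg_nonneg)
  show "\<forall>n. ?x n > 0" using y0 by (simp add: add_pos_nonneg)
  show "\<not> summable ?x"
  proof
    assume "summable ?x"
    then have "?x \<longlonglongrightarrow> 0" by (rule summable_LIMSEQ_zero)
    moreover have "\<exists>N. \<forall>n\<ge>N. 1 \<le> ?x n" using y0 by simp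
    ultimately have "(1::real) \<le> 0" by (rule LIMSEQ_le_const)
    then show False by simp
  qed
  have d: "\<And>\<sigma>. (\<lambda>n. ?x n - ?x (\<sigma> n)) = (\<lambda>n. yv a n - yv a (\<sigma> n))" by simp
  show "{(\<Sum>n. ?x n - ?x (\<sigma> n)) | \<sigma>. bij \<sigma> \<and> summable (\<lambda>n. ?x n - ?x (\<sigma> n))} = {a..}"
  proof
    show "{(\<Sum>n. ?x n - ?x (\<sigma> n)) | \<sigma>. bij \<sigma> \<and> summable (\<lambda>n. ?x n - ?x (\<sigma> n))} \<subseteq> {a..}"
      using lower[OF assms] unfolding d by auto
  next
    show "{a..} \<subseteq> {(\<Sum>n. ?x n - ?x (\<sigma> n)) | \<sigma>. bij \<sigma> \<and> summable (\<lambda>n. ?x n - ?x (\<sigma> n))}"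
    proof
      fix s assume "s \<in> {a..}"
      then have t: "0 \<le> s - a" by simp
      have su: "(\<lambda>n. yv a n - yv a (sig (s - a) n)) sums s" using upper[OF assms t] by simp
      show "s \<in> {(\<Sum>n. ?x n - ?x (\<sigma> n)) | \<sigma>. bij \<sigma> \<and> summable (\<lambda>n. ?x n - ?x (\<sigma> n))}"
        unfolding d
      proof (intro CollectI exI conjI)
        show "bij (sig (s - a))" by (rule sig_bij)
        show "summable (\<lambda>n. yv a n - yv a (sig (s - a) n))" using su by (rule sums_summable)
        show "s = (\<Sum>n. yv a n - yv a (sig (s - a) n))" using su by (rule sums_unique)
      qed
    qed
  qed
qed


end
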